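(* Let $d, N, s \ge 1$ and let $\mathbf{x}[1],\ldots,\mathbf{x}[N] \in \mathbb{R}^{d}$ be jointly Gaussian, zero-mean random vectors with $\mathrm{E}\{\mathbf{x}[n]\mathbf{x}^{T}[n']\} = \delta_{n,n'}\mathbf{C}[n]$, where the covariance matrices satisfy $0<\alpha[n] \le \lambda_{\min}(\mathbf{C}[n]) \le \lambda_{\max}(\mathbf{C}[n]) \le \beta[n]$ for given constants $\beta[n]\ge\alpha[n]>0$. Let $\mathbf{K}[n] := (\mathbf{C}[n])^{-1}$. Define the conditional independence graph $\mathcal{G}=(\mathcal{V},\mathcal{E})$ with $\mathcal{V}=\{1,\ldots,d\}$ by: for $a\neq b$, $(a,b)\notin\mathcal{E}$ iff $(\mathbf{K}[n])_{a,b}=0$ for all $n\in\{1,\ldots,N\}$. Let $\mathcal{N}(r)=\{t\in\mathcal{V}:(r,t)\in\mathcal{E}\}$ and assume $|\mathcal{N}(r)|\le s$ for all $r$. Define for $a\ne b$ the partial correlation $$\rho_{a,b} := \frac{1}{N}\sum_{n=1}^{N} \alpha[n]\Big[ (\mathbf{K}[n])_{a,b} / (\mathbf{K}[n])_{a,a}\Big]^2,$$ and assume there is $\rho_{\min}>0$ with $\rho_{a,b}\ge\rho_{\min}$ whenever $(a,b)\in\mathcal{E}$. For $i\in\mathcal{V}$ let $\mathbf{x}_i[\cdot]=(x_i[1],\ldots,x_i[N])^T$, and for $r\in\mathcal{V}$ and $\mathcal{T}\subseteq\mathcal{V}\setminus\{r\}$ let $$\mathrm{CV}(r,\mathcal{T})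 := \frac{1}{N}\,\mathrm{Tr}\Big\{ \mathrm{cov}\big\{ \mathbf{x}_r[\cdot] \,\big|\, \{\mathbf{x}_t[\cdot]\}_{t\in\mathcal{T}} \big\} \Big\}.$$ Let $\widetilde{\mathbf{K}}[r,r]$ denote the $N\times N$ diagonal matrix $\mathrm{diag}\big((\mathbf{K}[1])_{r,r},\ldots,(\mathbf{K}[N])_{r,r}\big)$ (equivalently, the $(r,r)$-th $N\times N$ block of the inverse covariance matrix of the component-wise stacked vector $(\mathbf{x}_1[\cdot]^T,\ldots,\mathbf{x}_d[\cdot]^T)^T$). Then for every $r\in\mathcal{V}$ and every $\mathcal{T}\subseteq\mathcal{V}\setminus\{r\}$ with $|\mathcal{T}|\le s$: (i) if $\mathcal{N}(r)\setminus\mathcal{T}\neq\emptyset$, then $\mathrm{CV}(r,\mathcal{T}) \ge \rho_{\min} + \frac{1}{N}\mathrm{Tr}\{\widetilde{\mathbf{K}}[r,r]^{-1}\}$; (ii) if $\mathcal{N}(r)\subseteq\mathcal{T}$, then $\mathrm{CV}(r,\mathcal{T}) = \frac{1}{N}\mathrm{Tr}\{\widetilde{\mathbf{K}}[r,r]^{-1}\}$.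
   Context: $\delta_{n,n'}$ is the Kronecker delta; $\lambda_{\min},\lambda_{\max}$ denote the smallest and largest eigenvalues. $\mathrm{cov}\{\mathbf{y}\mid\mathbf{z}\}$ denotes the conditional covariance matrix of $\mathbf{y}$ given $\mathbf{z}$ (deterministic for jointly Gaussian vectors). The graph $\mathcal{G}$ is an undirected simple graph; $(a,b)\in\mathcal{E}$ and $(b,a)\in\mathcal{E}$ mean the same edge. *)

theory Defs
  imports "Jordan_Normal_Form.Char_Poly" "Jordan_Normal_Form.Gauss_Jordan_Elimination"
          "Jordan_Normal_Form.DL_Submatrix"
begin

(* Conventions: vertices V = {0..<d}, time indices {0..<N} (0-based versions of
   {1..d}, {1..N}). Matrices are JNF matrices. *)

definition mtrace :: "real mat \<Rightarrow> real" where
  "mtrace A = (\<Sum>i<dim_row A. A $$ (i, i))"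

definition minv :: "real mat \<Rightarrow> real mat" where
  "minv A = the (mat_inverse A)"

(* covariance matrix of the stacked vector (x_0[.]^T,...,x_{d-1}[.]^T)^T,
   entry index k corresponds to component k div N at time k mod N;
   E{x[n] x[n']^T} = delta_{n,n'} C[n] *)
definition stacked_cov :: "nat \<Rightarrow> nat \<Rightarrow> (nat \<Rightarrow> real mat) \<Rightarrow> real mat" where
  "stacked_cov d N C = mat (d * N) (d * N)
     (\<lambda>(k, l). if k mod N = l mod N then C (k mod N) $$ (k div N, l div N) else 0)"

definition comp_idx :: "nat \<Rightarrow> nat \<Rightarrow> nat set \<Rightarrow> nat set" where
  "comp_idx d N S = {k. k < d * N \<and> k div N \<in> S}"

(* conditional covariance cov{y | z} of jointly Gaussian zero-mean vectors
   y = (entries Y), z = (entries Z) of a vector with covariance S: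
   S_YY - S_YZ S_ZZ^{-1} S_ZY *)
definition cond_cov :: "real mat \<Rightarrow> nat set \<Rightarrow> nat set \<Rightarrow> real mat" where
  "cond_cov S Y Z =
     submatrix S Y Y - submatrix S Y Z * minv (submatrix S Z Z) * submatrix S Z Y"

definition CV :: "nat \<Rightarrow> nat \<Rightarrow> (nat \<Rightarrow> real mat) \<Rightarrow> nat \<Rightarrow> nat set \<Rightarrow> real" where
  "CV d N C r T = mtrace (cond_cov (stacked_cov d N C) (comp_idx d N {r}) (comp_idx d N T)) / real N"

definition Kmat :: "(nat \<Rightarrow> real mat) \<Rightarrow> nat \<Rightarrow> real mat" where
  "Kmat C n = minv (C n)"

definition cig_edge :: "nat \<Rightarrow> nat \<Rightarrow> (nat \<Rightarrow> real mat) \<Rightarrow> nat \<Rightarrow> nat \<Rightarrow> bool" where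
  "cig_edge d N C a b = (a < d \<and> b < d \<and> a \<noteq> b \<and> (\<exists>n<N. Kmat C n $$ (a, b) \<noteq> 0))"

definition nbhd :: "nat \<Rightarrow> nat \<Rightarrow> (nat \<Rightarrow> real mat) \<Rightarrow> nat \<Rightarrow> nat set" where
  "nbhd d N C r = {t. t < d \<and> cig_edge d N C r t}"

definition part_corr :: "nat \<Rightarrow> (nat \<Rightarrow> real mat) \<Rightarrow> (nat \<Rightarrow> real) \<Rightarrow> nat \<Rightarrow> nat \<Rightarrow> real" where
  "part_corr N C \<alpha> a b =
     (\<Sum>n<N. \<alpha> n * (Kmat C n $$ (a, b) / Kmat C n $$ (a, a))\<^sup>2) / real N"

definition Ktilde :: "nat \<Rightarrow> (nat \<Rightarrow> real mat) \<Rightarrow> nat \<Rightarrow> real mat" where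
  "Ktilde N C r = mat N N (\<lambda>(i, j). if i = j then Kmat C i $$ (r, r) else 0)"

end

theory Submission
  imports Defs "HOL-Analysis.Analysis"
begin

definition qf :: "nat \<Rightarrow> real mat \<Rightarrow> (nat \<Rightarrow> real) \<Rightarrow> (nat \<Rightarrow> real) \<Rightarrow> real" where
  "qf n A x y = (\<Sum>i<n. \<Sum>j<n. x i * A $$ (i,j) * y j)"
definition nsq :: "nat \<Rightarrow> (nat \<Rightarrow> real) \<Rightarrow> real" where
  "nsq n x = (\<Sum>i<n. (x i)^2)"

lemma nsq_nonneg: "nsq n x \<ge> 0" unfolding nsq_def by (intro sum_nonneg) auto

lemma nsq_zero: "nsq n x = 0 \<Longrightarrow> i < n \<Longrightarrow> x i = 0"
  unfolding nsq_def by (subst (asm) sum_nonneg_eq_0_iff) auto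

lemma qf_expand:
  "qf n B (\<lambda>i. x i + t * y i) (\<lambda>i. x i + t * y i) =
     qf n B x x + t * qf n B x y + t * qf n B y x + t^2 * qf n B y y"
  unfolding qf_def by (simp add: algebra_simps sum.distrib sum_distrib_left power2_eq_square)

lemma qf_sym:
  assumes "\<And>i j. i<n \<Longrightarrow> j<n \<Longrightarrow> B$$(i,j) = B$$(j,i)"
  shows "qf n B x y = qf n B y x"
  unfolding qf_def
  apply (subst sum.swap)
  apply (intro sum.cong refl)
  using assms by (simp add: mult.commute mult.left_commute)

lemma psd_zero_kernel:
  assumes sym: "\<And>i j. i<n \<Longrightarrow> j<n \<Longrightarrow> B$$(i,j) = B$$(j,i)"
  and psd: "\<And>y. qf n B y y \<ge> 0" and z: "qf n B x x = 0" and i: "i < n"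
  shows "(\<Sum>j<n. B$$(i,j) * x j) = 0"
proof -
  define y where "y = (\<lambda>i. \<Sum>j<n. B$$(i,j) * x j)"
  have yx: "qf n B y x = nsq n y"
    unfolding qf_def nsq_def y_def power2_eq_square
    by (intro sum.cong refl) (simp add: sum_distrib_left mult.assoc)
  have xy: "qf n B x y = nsq n y" using yx qf_sym[OF sym] by metis
  define p where "p = nsq n y"
  define q where "q = qf n B y y"
  have q0: "q \<ge> 0" using psd q_def by auto
  have p0: "p \<ge> 0" using nsq_nonneg p_def by auto
  define t where "t = - p / (q + 1)"
  have "0 \<le> qf n B (\<lambda>i. x i + t * y i) (\<lambda>i. x i + t * y i)" using psd by auto
  also have "\<dots> = 2 * t * p + t^2 * q" unfolding qf_expand z xy yx p_def q_def by simp
  also have "\<dots> = p^2 * (- q - 2) / (q+1)^2"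
  proof -
    have hq: "q + 1 \<noteq> 0" using q0 by linarith
    show ?thesis unfolding t_def using hq
      by (simp add: divide_simps power2_eq_square) (simp add: algebra_simps)
  qed
  finally have "p^2 * (- q - 2) / (q+1)^2 \<ge> 0" .
  moreover have "(q+1)^2 > 0" using q0 by simp
  ultimately have "p^2 * (- q - 2) \<ge> 0" by (simp add: zero_le_divide_iff)
  hence "p^2 * (q + 2) \<le> 0" by (simp add: algebra_simps)
  moreover have "q + 2 > 0" using q0 by simp
  ultimately have "p^2 \<le> 0" by (simp add: mult_le_0_iff)
  hence "p = 0" by simp
  hence "y i = 0" using nsq_zero i p_def by auto
  thus ?thesis unfolding y_def .
qed

lemma qf_trunc: "qf n A (\<lambda>i. if i < n then x i else 0) (\<lambda>i. if i < n then x i else 0) = qf n A x x"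
  unfolding qf_def by (intro sum.cong refl) auto
lemma nsq_trunc: "nsq n (\<lambda>i. if i < n then x i else 0) = nsq n x"
  unfolding nsq_def by (intro sum.cong refl) auto

lemma qf_scale: "qf n A (\<lambda>i. c * x i) (\<lambda>i. c * x i) = c^2 * qf n A x x"
  unfolding qf_def by (simp add: sum_distrib_left algebra_simps power2_eq_square)
lemma nsq_scale: "nsq n (\<lambda>i. c * x i) = c^2 * nsq n x"
  unfolding nsq_def by (simp add: sum_distrib_left algebra_simps power2_eq_square)

lemma nsq_ge_sq: "i < n \<Longrightarrow> (x i)^2 \<le> nsq n x"
  unfolding nsq_def by (rule member_le_sum) auto

lemma compact_box: "compact (PiE UNIV (\<lambda>i::nat. if i < n then {-1..1::real} else {0}))"
proof -
  have "compactin (product_topology (\<lambda>i. euclidean) UNIV) (PiE UNIV (\<lambda>i::nat. if i < n then {-1..1::real} else {0}))"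
    by (subst compactin_PiE) auto
  thus ?thesis by (simp add: euclidean_product_topology)
qed

lemma cont_coord: "continuous_on S (\<lambda>x::nat\<Rightarrow>real. x i)"
  by (rule continuous_on_subset[OF continuous_on_product_coordinates]) simp

lemma cont_qf: "continuous_on S (\<lambda>x. qf n A x x)"
proof -
  have h: "\<And>i j. continuous_on S (\<lambda>x::nat\<Rightarrow>real. x i * A$$(i,j) * x j)"
    by (rule continuous_on_mult[OF continuous_on_mult[OF cont_coord continuous_on_const] cont_coord])
  show ?thesis unfolding qf_def by (rule continuous_on_sum, rule continuous_on_sum, rule h)
qed
lemma cont_nsq: "continuous_on S (\<lambda>x. nsq n x)"
proof -
  have h: "\<And>i. continuous_on S (\<lambda>x::nat\<Rightarrow>real. (x i)^2)"
    by (rule continuous_on_power[OF cont_coord])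
  show ?thesis unfolding nsq_def by (rule continuous_on_sum, rule h)
qed

lemma rayleigh_min:
  assumes n: "n > 0"
  shows "\<exists>x0. nsq n x0 = 1 \<and> (\<forall>y. qf n A y y \<ge> qf n A x0 x0 * nsq n y)"
proof -
  define Box where "Box = PiE UNIV (\<lambda>i::nat. if i < n then {-1..1::real} else {0})"
  define Sph where "Sph = Box \<inter> {x. nsq n x = 1}"
  have "closed {x. nsq n x = 1}"
    by (rule closed_Collect_eq[OF cont_nsq continuous_on_const])
  hence cS: "compact Sph" unfolding Sph_def Box_def by (rule compact_Int_closed[OF compact_box])
  define e0 where "e0 = (\<lambda>i::nat. if i = 0 then 1::real else 0)"
  have "nsq n e0 = (\<Sum>i<n. if i = 0 then 1 else 0)" unfolding nsq_def e0_def
    by (intro sum.cong refl) auto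
  also have "\<dots> = 1" using n by simp
  finally have "nsq n e0 = 1" .
  hence "e0 \<in> Sph" unfolding Sph_def Box_def using n
    by (auto simp: PiE_iff e0_def)
  hence ne: "Sph \<noteq> {}" by auto
  obtain x0 where x0: "x0 \<in> Sph" and mn: "\<And>y. y \<in> Sph \<Longrightarrow> qf n A x0 x0 \<le> qf n A y y"
    using continuous_attains_inf[OF cS ne cont_qf] by blast
  have "qf n A y y \<ge> qf n A x0 x0 * nsq n y" for y
  proof (cases "nsq n y = 0")
    case True
    hence "qf n A y y = 0" unfolding qf_def by (auto intro!: sum.neutral simp: nsq_zero[OF True])
    thus ?thesis using True by simp
  next
    case False
    hence pos: "nsq n y > 0" using nsq_nonneg[of n y] by linarith
    define c where "c = 1 / sqrt (nsq n y)"
    define z where "z = (\<lambda>i. c * (if i < n then y i else 0))"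
    have c2: "c^2 = 1 / nsq n y" unfolding c_def using pos by (simp add: power_divide)
    have nz: "nsq n z = 1" unfolding z_def nsq_scale nsq_trunc c2 using pos by simp
    have "z \<in> Box" unfolding Box_def PiE_iff
    proof (intro conjI allI ballI)
      fix i
      show "z i \<in> (if i < n then {-1..1} else {0})"
      proof (cases "i < n")
        case True
        have "(z i)^2 \<le> 1" using nsq_ge_sq[OF True, of z] nz by simp
        hence "\<bar>z i\<bar> \<le> 1" by (simp add: abs_square_le_1)
        thus ?thesis using True by auto
      qed (auto simp: z_def)
    qed auto
    hence "z \<in> Sph" unfolding Sph_def using nz by auto
    hence "qf n A x0 x0 \<le> qf n A z z" by (rule mn)
    also have "qf n A z z = qf n A y y / nsq n y" unfolding z_def qf_scale qf_trunc c2 by simp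
    finally show ?thesis using pos by (simp add: pos_le_divide_eq mult.commute)
  qed
  moreover have "nsq n x0 = 1" using x0 unfolding Sph_def by auto
  ultimately show ?thesis by (intro exI[of _ x0]) simp
qed

lemma sym_eig_lower:
  fixes A :: "real mat"
  assumes A: "A \<in> carrier_mat n n" and sym: "\<And>i j. i<n \<Longrightarrow> j<n \<Longrightarrow> A$$(i,j) = A$$(j,i)"
  and eig: "\<And>lam. eigenvalue A lam \<Longrightarrow> a \<le> lam"
  shows "qf n A x x \<ge> a * nsq n x"
proof (cases "n = 0")
  case True thus ?thesis unfolding qf_def nsq_def by simp
next
  case False
  then obtain x0 where n1: "nsq n x0 = 1" and mn: "\<And>y. qf n A y y \<ge> qf n A x0 x0 * nsq n y"
    using rayleigh_min[of n A] by auto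
  define m where "m = qf n A x0 x0"
  define B where "B = Matrix.mat n n (\<lambda>(i,j). A$$(i,j) - (if i = j then m else 0))"
  have Bij: "i<n \<Longrightarrow> j<n \<Longrightarrow> B$$(i,j) = A$$(i,j) - (if i = j then m else 0)" for i j
    unfolding B_def by simp
  have qB: "qf n B y y = qf n A y y - m * nsq n y" for y
  proof -
    have "qf n B y y = (\<Sum>i<n. \<Sum>j<n. y i * A$$(i,j) * y j - (if i = j then m * y i * y j else 0))"
      unfolding qf_def by (intro sum.cong refl) (auto simp: Bij algebra_simps)
    also have "\<dots> = qf n A y y - (\<Sum>i<n. m * (y i)^2)"
      unfolding qf_def sum_subtractf by (simp add: power2_eq_square mult.assoc)
    also have "\<dots> = qf n A y y - m * nsq n y" unfolding nsq_def sum_distrib_left ..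
    finally show ?thesis .
  qed
  have symB: "\<And>i j. i<n \<Longrightarrow> j<n \<Longrightarrow> B$$(i,j) = B$$(j,i)" using sym by (auto simp: Bij)
  have psdB: "\<And>y. qf n B y y \<ge> 0" using mn unfolding qB m_def by auto
  have zB: "qf n B x0 x0 = 0" unfolding qB n1 m_def by simp
  have ker: "(\<Sum>j<n. A$$(i,j) * x0 j) = m * x0 i" if i: "i < n" for i
  proof -
    have "0 = (\<Sum>j<n. B$$(i,j) * x0 j)" using psd_zero_kernel[OF symB psdB zB i] by simp
    also have "\<dots> = (\<Sum>j<n. A$$(i,j) * x0 j - (if i = j then m * x0 j else 0))"
      by (intro sum.cong refl) (auto simp: Bij i algebra_simps)
    also have "\<dots> = (\<Sum>j<n. A$$(i,j) * x0 j) - m * x0 i"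
      unfolding sum_subtractf using i by simp
    finally show ?thesis by simp
  qed
  define v where "v = Matrix.vec n x0"
  have Av: "A *\<^sub>v v = m \<cdot>\<^sub>v v"
  proof (rule eq_vecI)
    fix i assume "i < dim_vec (m \<cdot>\<^sub>v v)"
    hence i: "i < n" unfolding v_def by simp
    have "(A *\<^sub>v v) $ i = Matrix.row A i \<bullet> v" using A i by simp
    also have "\<dots> = (\<Sum>j<n. A$$(i,j) * x0 j)" unfolding scalar_prod_def v_def using A i
      by (intro sum.cong) auto
    also have "\<dots> = (m \<cdot>\<^sub>v v) $ i" using ker[OF i] i unfolding v_def by simp
    finally show "(A *\<^sub>v v) $ i = (m \<cdot>\<^sub>v v) $ i" .
  qed (use A in \<open>simp add: v_def\<close>)
  have "v \<noteq> 0\<^sub>v n"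
  proof
    assume "v = 0\<^sub>v n"
    hence "\<And>i. i < n \<Longrightarrow> x0 i = 0" unfolding v_def by (metis index_vec index_zero_vec(1))
    hence "nsq n x0 = 0" unfolding nsq_def by simp
    thus False using n1 by simp
  qed
  hence "eigenvector A v m" unfolding eigenvector_def using A Av by (auto simp: v_def)
  hence "a \<le> m" using eig unfolding eigenvalue_def by blast
  hence "a * nsq n x \<le> m * nsq n x" using nsq_nonneg by (simp add: mult_right_mono)
  also have "\<dots> \<le> qf n A x x" using mn m_def by (simp add: mult.commute)
  finally show ?thesis .
qed

lemma mult_entry:
  assumes "A \<in> carrier_mat a b" "B \<in> carrier_mat b c" "i < a" "j < c"
  shows "(A * B) $$ (i,j) = (\<Sum>l<b. A$$(i,l) * B$$(l,j))"
  using assms by (simp add: scalar_prod_def atLeast0LessThan)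

lemma inv_sym:
  fixes C K :: "real mat"
  assumes C: "C \<in> carrier_mat d d" and K: "K \<in> carrier_mat d d"
  and CK: "C * K = 1\<^sub>m d" and KC: "K * C = 1\<^sub>m d" and sym: "transpose_mat C = C"
  shows "transpose_mat K = K"
proof -
  have Kt: "transpose_mat K \<in> carrier_mat d d" using K by simp
  have "transpose_mat K = transpose_mat K * (C * K)" using right_mult_one_mat[OF Kt] CK by simp
  also have "\<dots> = (transpose_mat K * C) * K" using Kt C K by simp
  also have "transpose_mat K * C = transpose_mat K * transpose_mat C" using sym by simp
  also have "\<dots> = transpose_mat (C * K)" using C K by (simp add: transpose_mult)
  also have "\<dots> = 1\<^sub>m d" using CK by simp
  finally show ?thesis using K by simp
qed

definition gv :: "real mat \<Rightarrow> nat \<Rightarrow> nat \<Rightarrow> real" where "gv K r = (\<lambda>t. K$$(t,r) / K$$(r,r))"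

context
  fixes C K :: "real mat" and d r :: nat and a :: real
  assumes C: "C \<in> carrier_mat d d" and K: "K \<in> carrier_mat d d" and CK: "C * K = 1\<^sub>m d"
  and symC: "\<And>i j. i<d \<Longrightarrow> j<d \<Longrightarrow> C$$(i,j) = C$$(j,i)"
  and pd: "\<And>x. qf d C x x \<ge> a * nsq d x" and apos: "a > 0" and r: "r < d"
begin

lemma CK_col: "i < d \<Longrightarrow> (\<Sum>j<d. C$$(i,j) * K$$(j,r)) = (if i = r then 1 else 0)"
  using mult_entry[OF C K, of i r] CK r by simp

lemma qf_Kcol: "qf d C y (\<lambda>t. K$$(t,r)) = y r"
proof -
  have "qf d C y (\<lambda>t. K$$(t,r)) = (\<Sum>i<d. y i * (\<Sum>j<d. C$$(i,j) * K$$(j,r)))"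
    unfolding qf_def by (simp add: sum_distrib_left mult.assoc)
  also have "\<dots> = (\<Sum>i<d. if i = r then y i else 0)"
    by (intro sum.cong refl) (simp add: CK_col)
  also have "\<dots> = y r" using r by simp
  finally show ?thesis .
qed

lemma Kpos: "K$$(r,r) > 0"
proof -
  define k where "k = (\<lambda>t. K$$(t,r))"
  have "qf d C k k = K$$(r,r)" unfolding k_def qf_Kcol ..
  moreover have "nsq d k > 0"
  proof (rule ccontr)
    assume "\<not> nsq d k > 0"
    hence "nsq d k = 0" using nsq_nonneg[of d k] by linarith
    hence "\<And>j. j < d \<Longrightarrow> k j = 0" using nsq_zero by blast
    hence "(\<Sum>j<d. C$$(r,j) * K$$(j,r)) = 0" unfolding k_def by simp
    thus False using CK_col[OF r] by simp
  qed
  ultimately show ?thesis using pd[of k] apos by (metis mult_pos_pos order_less_le_trans)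
qed


lemma qf_g: "qf d C y (gv K r) = y r / K$$(r,r)"
proof -
  have "qf d C y (gv K r) = qf d C y (\<lambda>t. K$$(t,r)) / K$$(r,r)"
    unfolding qf_def gv_def by (simp add: sum_divide_distrib)
  thus ?thesis unfolding qf_Kcol .
qed

lemma g_r: "(gv K r) r = 1" unfolding gv_def using Kpos by simp

lemma qf_gg: "qf d C (gv K r) (gv K r) = 1 / K$$(r,r)" unfolding qf_g g_r ..

lemma qf_lower:
  assumes u: "u r = 1"
  shows "qf d C u u \<ge> 1 / K$$(r,r) + a * nsq d (\<lambda>t. u t - (gv K r) t)"
proof -
  define h where "h = (\<lambda>t. u t - (gv K r) t)"
  have "u = (\<lambda>i. (gv K r) i + 1 * h i)" unfolding h_def by simp
  hence "qf d C u u = qf d C (gv K r) (gv K r) + qf d C (gv K r) h + qf d C h (gv K r) + qf d C h h"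
    using qf_expand[where n=d and B=C and x="gv K r" and t=1 and y=h] by simp
  also have "qf d C h (gv K r) = 0" unfolding qf_g h_def using u g_r by simp
  also have "qf d C (gv K r) h = 0" using qf_sym[OF symC, where x="gv K r" and y=h] \<open>qf d C h (gv K r) = 0\<close> by simp
  finally have "qf d C u u = 1 / K$$(r,r) + qf d C h h" unfolding qf_gg by simp
  thus ?thesis using pd[of h] unfolding h_def by simp
qed

end


lemma schur_min:
  fixes M P :: "real mat" and c :: "nat \<Rightarrow> real" and sz :: real
  assumes M: "M \<in> carrier_mat m m" and P: "P \<in> carrier_mat m m" and MP: "M * P = 1\<^sub>m m"
  and symM: "\<And>a b. a<m \<Longrightarrow> b<m \<Longrightarrow> M$$(a,b) = M$$(b,a)"
  and psd: "\<And>w. qf m M w w \<ge> 0"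
  shows "\<exists>w. sz - 2 * (\<Sum>a<m. c a * w a) + qf m M w w = sz - qf m P c c"
    and "sz - qf m P c c \<le> sz - 2 * (\<Sum>a<m. c a * w a) + qf m M w w"
proof -
  define ws where "ws = (\<lambda>a. \<Sum>b<m. P$$(a,b) * c b)"
  have Mws: "(\<Sum>b<m. M$$(a,b) * ws b) = c a" if a: "a < m" for a
  proof -
    have "(\<Sum>b<m. M$$(a,b) * ws b) = (\<Sum>e<m. (\<Sum>b<m. M$$(a,b) * P$$(b,e)) * c e)"
      unfolding ws_def sum_distrib_left sum_distrib_right
      by (subst sum.swap) (simp add: mult.assoc)
    also have "\<dots> = (\<Sum>e<m. (if a = e then 1 else 0) * c e)"
      by (intro sum.cong refl) (use mult_entry[OF M P, of a] MP a in simp)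
    also have "\<dots> = (\<Sum>e<m. if a = e then c e else 0)" by (intro sum.cong) auto
    also have "\<dots> = c a" using a by (simp add: sum.delta)
    finally show ?thesis .
  qed
  have qy: "qf m M y ws = (\<Sum>a<m. c a * y a)" for y
  proof -
    have "qf m M y ws = (\<Sum>a<m. y a * (\<Sum>b<m. M$$(a,b) * ws b))"
      unfolding qf_def by (simp add: sum_distrib_left mult.assoc)
    also have "\<dots> = (\<Sum>a<m. c a * y a)" by (intro sum.cong refl) (simp add: Mws)
    finally show ?thesis .
  qed
  have qwsws: "qf m M ws ws = qf m P c c"
    unfolding qy unfolding qf_def ws_def by (simp add: sum_distrib_left mult.commute mult.left_commute)
  show "\<exists>w. sz - 2 * (\<Sum>a<m. c a * w a) + qf m M w w = sz - qf m P c c"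
    by (rule exI[of _ ws]) (simp add: qwsws flip: qy)
  have "qf m M (\<lambda>i. w i + (-1) * ws i) (\<lambda>i. w i + (-1) * ws i)
      = qf m M w w - qf m M w ws - qf m M ws w + qf m M ws ws"
    using qf_expand[where n=m and B=M and x=w and t="-1" and y=ws] by simp
  also have "qf m M ws w = qf m M w ws" using qf_sym[OF symM] by metis
  finally have "qf m M (\<lambda>i. w i + (-1) * ws i) (\<lambda>i. w i + (-1) * ws i)
      = qf m M w w - 2 * (\<Sum>a<m. c a * w a) + qf m P c c" unfolding qy using qwsws[unfolded qy] by simp
  thus "sz - qf m P c c \<le> sz - 2 * (\<Sum>a<m. c a * w a) + qf m M w w"
    using psd[of "\<lambda>i. w i + (-1) * ws i"] by simp
qed


lemma minv_props:
  fixes A :: "real mat"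
  assumes A: "A \<in> carrier_mat n n"
  and ker: "\<And>v. v \<in> carrier_vec n \<Longrightarrow> A *\<^sub>v v = 0\<^sub>v n \<Longrightarrow> v = 0\<^sub>v n"
  shows "A * minv A = 1\<^sub>m n" "minv A * A = 1\<^sub>m n" "minv A \<in> carrier_mat n n"
proof -
  have "Determinant.det A \<noteq> 0" using det_0_iff_vec_prod_zero_field[OF A] ker by blast
  hence U: "A \<in> Units (ring_mat TYPE(real) n ())" by (rule det_non_zero_imp_unit[OF A])
  obtain B where B: "mat_inverse A = Some B"
  proof (cases "mat_inverse A")
    case None
    with mat_inverse(1)[OF A None, where b="()"] U show ?thesis by simp
  qed
  from mat_inverse(2)[OF A B] show "A * minv A = 1\<^sub>m n" "minv A * A = 1\<^sub>m n" "minv A \<in> carrier_mat n n"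
    unfolding minv_def B by auto
qed

lemma minv_unique:
  fixes A B :: "real mat"
  assumes A: "A \<in> carrier_mat n n" and B: "B \<in> carrier_mat n n" and AB: "A * B = 1\<^sub>m n"
  shows "minv A = B"
proof -
  have BA: "B * A = 1\<^sub>m n" by (rule mat_mult_left_right_inverse[OF A B AB])
  have ker: "v = 0\<^sub>v n" if v: "v \<in> carrier_vec n" and Av: "A *\<^sub>v v = 0\<^sub>v n" for v
  proof -
    have "v = (B * A) *\<^sub>v v" using BA v by simp
    also have "\<dots> = B *\<^sub>v (A *\<^sub>v v)" using A B v by (simp add: assoc_mult_mat_vec)
    also have "\<dots> = 0\<^sub>v n" using Av B by (auto intro!: eq_vecI simp: scalar_prod_def)
    finally show ?thesis .
  qed
  note mp = minv_props[OF A ker]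
  have "minv A = minv A * (A * B)" using AB mp(3) right_mult_one_mat by metis
  also have "\<dots> = (minv A * A) * B" using mp(3) A B by simp
  also have "\<dots> = B" using mp(2) B by simp
  finally show ?thesis .
qed

lemma pick_bij:
  assumes "finite Z"
  shows "bij_betw (pick Z) {..<card Z} Z"
  unfolding bij_betw_def
proof
  show "inj_on (pick Z) {..<card Z}"
  proof (rule inj_onI)
    fix a b assume a: "a \<in> {..<card Z}" and b: "b \<in> {..<card Z}" and e: "pick Z a = pick Z b"
    show "a = b"
    proof (rule ccontr)
      assume "a \<noteq> b"
      hence "a < b \<or> b < a" by auto
      thus False using pick_mono[of b Z a] pick_mono[of a Z b] a b e by auto
    qed
  qed
  show "pick Z ` {..<card Z} = Z"
  proof
    show "pick Z ` {..<card Z} \<subseteq> Z" using pick_in_set by auto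
    show "Z \<subseteq> pick Z ` {..<card Z}"
    proof
      fix k assume k: "k \<in> Z"
      have "{a \<in> Z. a < k} \<subset> Z" using k by auto
      hence "card {a \<in> Z. a < k} < card Z" using assms by (simp add: psubset_card_mono)
      moreover have "pick Z (card {a \<in> Z. a < k}) = k" using pick_card_in_set[OF k] .
      ultimately show "k \<in> pick Z ` {..<card Z}"
        using image_eqI[of k "pick Z" "card {a\<in>Z. a<k}" "{..<card Z}"] by simp
    qed
  qed
qed

lemma sum_pick: "finite Z \<Longrightarrow> (\<Sum>a<card Z. f (pick Z a)) = (\<Sum>k\<in>Z. f k)"
  using sum.reindex_bij_betw[OF pick_bij] by blast

lemma comp_idx_image:
  assumes N: "N > 0" and T: "T \<subseteq> {..<d}"
  shows "comp_idx d N T = (\<lambda>(t,n). t*N+n) ` (T \<times> {..<N})"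
proof
  show "comp_idx d N T \<subseteq> (\<lambda>(t,n). t*N+n) ` (T \<times> {..<N})"
  proof
    fix k assume "k \<in> comp_idx d N T"
    hence "k div N \<in> T" unfolding comp_idx_def by auto
    moreover have "k = (k div N) * N + k mod N" by simp
    moreover have "k mod N < N" using N by simp
    ultimately show "k \<in> (\<lambda>(t,n). t*N+n) ` (T \<times> {..<N})" by (auto intro!: image_eqI[of _ _ "(k div N, k mod N)"])
  qed
  show "(\<lambda>(t,n). t*N+n) ` (T \<times> {..<N}) \<subseteq> comp_idx d N T"
  proof
    fix k assume "k \<in> (\<lambda>(t,n). t*N+n) ` (T \<times> {..<N})"
    then obtain t n where k: "k = t*N+n" and t: "t \<in> T" and n: "n < N" by auto
    have "t < d" using t T by auto
    hence "t + 1 \<le> d" by simp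
    hence "(t+1)*N \<le> d*N" by (rule mult_right_mono) simp
    hence "k < d*N" using k n by (simp add: algebra_simps)
    moreover have "k div N = t" using k n by simp
    ultimately show "k \<in> comp_idx d N T" unfolding comp_idx_def using t by auto
  qed
qed

lemma inj_tn: "(N::nat) > 0 \<Longrightarrow> inj_on (\<lambda>(t,n). t*N+n) (T \<times> {..<N})"
proof (rule inj_onI, clarsimp)
  fix t n t' n' :: nat assume n: "n < N" and n': "n' < N" and h: "t*N+n = t'*N+n'"
  have "t = (t*N+n) div N" using n by simp
  also have "\<dots> = (t'*N+n') div N" using h by simp
  also have "\<dots> = t'" using n' by simp
  finally show "t = t' \<and> n = n'" using h by simp
qed

lemma sum_comp_idx:
  assumes N: "N > 0" and T: "T \<subseteq> {..<d}"
  shows "(\<Sum>k\<in>comp_idx d N T. f k) = (\<Sum>t\<in>T. \<Sum>n<N. f (t*N+n))"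
proof -
  have fT: "finite T" using T finite_subset by blast
  have "(\<Sum>k\<in>comp_idx d N T. f k) = (\<Sum>p\<in>T \<times> {..<N}. f ((\<lambda>(t,n). t*N+n) p))"
    unfolding comp_idx_image[OF N T] by (simp add: sum.reindex[OF inj_tn[OF N]] comp_def)
  also have "\<dots> = (\<Sum>t\<in>T. \<Sum>n<N. f (t*N+n))"
    unfolding sum.cartesian_product by (intro sum.cong) auto
  finally show ?thesis .
qed

lemma card_comp_idx:
  assumes N: "N > 0" and T: "T \<subseteq> {..<d}"
  shows "card (comp_idx d N T) = card T * N"
  unfolding comp_idx_image[OF N T] card_image[OF inj_tn[OF N]] by (simp add: card_cartesian_product)

lemma finite_comp_idx: "finite (comp_idx d N T)" unfolding comp_idx_def by simp

lemma comp_idx_bound: "comp_idx d N T \<subseteq> {..<d*N}" unfolding comp_idx_def by auto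

lemma card_restrict: "Y \<subseteq> {..<n} \<Longrightarrow> card {i. i < n \<and> i \<in> Y} = card Y"
  by (metis (no_types, lifting) Collect_cong Collect_mem_eq lessThan_iff subset_iff)

lemma pick_Y:
  assumes N: "N > 0" and r: "r < d" and i: "i < N"
  shows "pick (comp_idx d N {r}) i = r*N + i"
proof -
  let ?Y = "comp_idx d N {r}"
  have mem: "r*N + i \<in> ?Y" using comp_idx_image[OF N, of "{r}" d] r i by auto
  have "{a \<in> ?Y. a < r*N+i} = {r*N..<r*N+i}"
  proof
    show "{a \<in> ?Y. a < r*N+i} \<subseteq> {r*N..<r*N+i}"
    proof
      fix a assume a: "a \<in> {a \<in> ?Y. a < r*N+i}"
      hence "a div N = r" unfolding comp_idx_def by auto
      hence "r*N \<le> a" by (metis div_times_less_eq_dividend mult.commute)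
      thus "a \<in> {r*N..<r*N+i}" using a by auto
    qed
    show "{r*N..<r*N+i} \<subseteq> {a \<in> ?Y. a < r*N+i}"
    proof
      fix a assume a: "a \<in> {r*N..<r*N+i}"
      then obtain j where "a = r*N + j" "j < i" by (metis atLeastLessThan_iff le_Suc_ex nat_add_left_cancel_less)
      thus "a \<in> {a \<in> ?Y. a < r*N+i}" using comp_idx_image[OF N, of "{r}" d] r i by auto
    qed
  qed
  hence "card {a \<in> ?Y. a < r*N+i} = i" by simp
  with pick_card_in_set[OF mem] show ?thesis by simp
qed

lemma idx_bound:
  assumes "t < d" "n < (N::nat)" shows "t*N+n < d*N"
proof -
  have "(t+1)*N \<le> d*N" using assms by (intro mult_right_mono) auto
  thus ?thesis using assms by (simp add: algebra_simps)
qed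

lemma idx_div: "n < (N::nat) \<Longrightarrow> (t*N+n) div N = t" by simp
lemma idx_mod: "n < (N::nat) \<Longrightarrow> (t*N+n) mod N = n" by simp

lemma S_entry:
  assumes "t < d" "t' < d" "n < N" "n' < N"
  shows "stacked_cov d N C $$ (t*N+n, t'*N+n') = (if n = n' then C n $$ (t,t') else 0)"
proof -
  have "t*N+n < d*N" "t'*N+n' < d*N"
    using assms idx_bound by auto
  thus ?thesis unfolding stacked_cov_def using assms by simp
qed


lemma sum_restrictT: fixes d :: nat assumes "T \<subseteq> {..<d}" shows "(\<Sum>j<d. if j \<in> T then F j else 0) = (\<Sum>j\<in>T. F j)"
proof -
  have "(\<Sum>j<d. if j \<in> T then F j else 0) = sum F ({..<d} \<inter> T)"
    by (rule sum.inter_restrict[symmetric]) simp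
  also have "{..<d} \<inter> T = T" using assms by auto
  finally show ?thesis .
qed

definition uW :: "nat set \<Rightarrow> nat \<Rightarrow> (nat \<Rightarrow> real) \<Rightarrow> nat \<Rightarrow> nat \<Rightarrow> real" where
  "uW T N W n t = (if t \<in> T then W (t*N+n) else 0)"

lemma qf_restrict:
  assumes T: "T \<subseteq> {..<d}"
  shows "qf d A (\<lambda>t. if t \<in> T then x t else 0) (\<lambda>t. if t \<in> T then x t else 0)
         = (\<Sum>t\<in>T. \<Sum>t'\<in>T. x t * A$$(t,t') * x t')"
proof -
  have "qf d A (\<lambda>t. if t \<in> T then x t else 0) (\<lambda>t. if t \<in> T then x t else 0)
     = (\<Sum>t<d. if t \<in> T then (\<Sum>t'<d. if t' \<in> T then x t * A$$(t,t') * x t' else 0) else 0)"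
    unfolding qf_def by (intro sum.cong refl) (auto intro!: sum.cong)
  also have "\<dots> = (\<Sum>t\<in>T. \<Sum>t'\<in>T. x t * A$$(t,t') * x t')"
    unfolding sum_restrictT[OF T] ..
  finally show ?thesis .
qed

lemma qf_e:
  assumes "r < (d::nat)"
  shows "qf d A (\<lambda>t. if t = r then 1 else 0) y = (\<Sum>j<d. A$$(r,j) * y j)"
proof -
  have "qf d A (\<lambda>t. if t = r then 1 else 0) y = (\<Sum>i<d. if i = r then (\<Sum>j<d. A$$(r,j) * y j) else 0)"
    unfolding qf_def by (intro sum.cong refl) auto
  also have "\<dots> = (\<Sum>j<d. A$$(r,j) * y j)" using assms by simp
  finally show ?thesis .
qed

lemma qf_ee:
  assumes "r < (d::nat)"
  shows "qf d A (\<lambda>t. if t = r then 1 else 0) (\<lambda>t. if t = r then 1 else 0) = A$$(r,r)"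
  unfolding qf_e[OF assms] using assms by (simp add: if_distrib cong: if_cong)

lemma qf_cong: "(\<And>t. t < d \<Longrightarrow> x t = y t) \<Longrightarrow> qf d A x x = qf d A y y"
  unfolding qf_def by (intro sum.cong refl) auto

definition Uf :: "nat set \<Rightarrow> nat \<Rightarrow> nat \<Rightarrow> (nat \<Rightarrow> real) \<Rightarrow> nat \<Rightarrow> nat \<Rightarrow> real" where
  "Uf T N r W i t = (if t = r then 1 else 0) + (-1) * uW T N W i t"

context
  fixes d N :: nat and C :: "nat \<Rightarrow> real mat" and T :: "nat set" and r :: nat
  assumes N: "N > 0" and T: "T \<subseteq> {..<d}" and r: "r < d"
begin

lemma lin_term:
  assumes i: "i < N"
  shows "(\<Sum>a<card (comp_idx d N T). stacked_cov d N C $$ (r*N+i, pick (comp_idx d N T) a) * W (pick (comp_idx d N T) a))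
    = (\<Sum>j<d. C i $$ (r,j) * uW T N W i j)"
proof -
  have "(\<Sum>a<card (comp_idx d N T). stacked_cov d N C $$ (r*N+i, pick (comp_idx d N T) a) * W (pick (comp_idx d N T) a))
     = (\<Sum>k\<in>comp_idx d N T. stacked_cov d N C $$ (r*N+i, k) * W k)"
    by (rule sum_pick[OF finite_comp_idx])
  also have "\<dots> = (\<Sum>t\<in>T. \<Sum>n<N. stacked_cov d N C $$ (r*N+i, t*N+n) * W (t*N+n))"
    by (rule sum_comp_idx[OF N T])
  also have "\<dots> = (\<Sum>t\<in>T. \<Sum>n<N. if i = n then C i $$ (r,t) * W (t*N+i) else 0)"
    using T r i by (intro sum.cong refl) (auto simp: S_entry)
  also have "\<dots> = (\<Sum>t\<in>T. C i $$ (r,t) * W (t*N+i))" using i by simp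
  also have "\<dots> = (\<Sum>j<d. C i $$ (r,j) * uW T N W i j)"
    unfolding uW_def using sum_restrictT[OF T, of "\<lambda>j. C i $$ (r,j) * W (j*N+i)"]
    by (simp add: if_distrib cong: if_cong)
  finally show ?thesis .
qed

lemma quad_term:
  "(\<Sum>a<card (comp_idx d N T). \<Sum>b<card (comp_idx d N T).
      W (pick (comp_idx d N T) a) * stacked_cov d N C $$ (pick (comp_idx d N T) a, pick (comp_idx d N T) b) * W (pick (comp_idx d N T) b))
   = (\<Sum>n<N. qf d (C n) (uW T N W n) (uW T N W n))"
proof -
  let ?Z = "comp_idx d N T"
  let ?S = "stacked_cov d N C"
  have Td: "\<And>t. t \<in> T \<Longrightarrow> t < d" using T by auto
  have "(\<Sum>a<card ?Z. \<Sum>b<card ?Z. W (pick ?Z a) * ?S $$ (pick ?Z a, pick ?Z b) * W (pick ?Z b))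
     = (\<Sum>a<card ?Z. \<Sum>l\<in>?Z. W (pick ?Z a) * ?S $$ (pick ?Z a, l) * W l)"
    by (intro sum.cong refl sum_pick[OF finite_comp_idx])
  also have "\<dots> = (\<Sum>k\<in>?Z. \<Sum>l\<in>?Z. W k * ?S $$ (k, l) * W l)"
    by (rule sum_pick[OF finite_comp_idx])
  also have "\<dots> = (\<Sum>t\<in>T. \<Sum>n<N. \<Sum>t'\<in>T. \<Sum>n'<N. W (t*N+n) * ?S $$ (t*N+n, t'*N+n') * W (t'*N+n'))"
    unfolding sum_comp_idx[OF N T] ..
  also have "\<dots> = (\<Sum>t\<in>T. \<Sum>n<N. \<Sum>t'\<in>T. \<Sum>n'<N. if n = n' then W (t*N+n) * C n $$ (t,t') * W (t'*N+n) else 0)"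
    by (intro sum.cong refl) (simp add: S_entry Td)
  also have "\<dots> = (\<Sum>t\<in>T. \<Sum>n<N. \<Sum>t'\<in>T. W (t*N+n) * C n $$ (t,t') * W (t'*N+n))"
    by simp
  also have "\<dots> = (\<Sum>n<N. \<Sum>t\<in>T. \<Sum>t'\<in>T. W (t*N+n) * C n $$ (t,t') * W (t'*N+n))"
    by (rule sum.swap)
  also have "\<dots> = (\<Sum>n<N. qf d (C n) (uW T N W n) (uW T N W n))"
    unfolding uW_def qf_restrict[OF T] ..
  finally show ?thesis .
qed



lemma q_eq:
  assumes i: "i < N" and symC: "\<And>a b. a < d \<Longrightarrow> b < d \<Longrightarrow> C i $$ (a,b) = C i $$ (b,a)"
  shows "C i $$ (r,r) - 2 * (\<Sum>a<card (comp_idx d N T). stacked_cov d N C $$ (r*N+i, pick (comp_idx d N T) a) * W (pick (comp_idx d N T) a))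
     + (\<Sum>a<card (comp_idx d N T). \<Sum>b<card (comp_idx d N T).
      W (pick (comp_idx d N T) a) * stacked_cov d N C $$ (pick (comp_idx d N T) a, pick (comp_idx d N T) b) * W (pick (comp_idx d N T) b))
   = qf d (C i) (Uf T N r W i) (Uf T N r W i) + (\<Sum>n\<in>{..<N}-{i}. qf d (C n) (uW T N W n) (uW T N W n))"
proof -
  let ?e = "\<lambda>t::nat. if t = r then 1 else (0::real)"
  let ?u = "uW T N W i"
  let ?L = "\<Sum>j<d. C i $$ (r,j) * ?u j"
  have "Uf T N r W i = (\<lambda>t. ?e t + (-1) * ?u t)" unfolding Uf_def by auto
  hence "qf d (C i) (Uf T N r W i) (Uf T N r W i) = qf d (C i) ?e ?e + (-1) * qf d (C i) ?e ?u + (-1) * qf d (C i) ?u ?e + (-1)^2 * qf d (C i) ?u ?u"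
    using qf_expand[where n=d and B="C i" and x="?e" and t="-1" and y="?u"] by simp
  also have "qf d (C i) ?u ?e = qf d (C i) ?e ?u" using qf_sym[OF symC] by metis
  finally have U: "qf d (C i) (Uf T N r W i) (Uf T N r W i) = C i $$ (r,r) - 2 * ?L + qf d (C i) ?u ?u"
    unfolding qf_ee[OF r] qf_e[OF r] by simp
  have "(\<Sum>n<N. qf d (C n) (uW T N W n) (uW T N W n)) = qf d (C i) ?u ?u + (\<Sum>n\<in>{..<N}-{i}. qf d (C n) (uW T N W n) (uW T N W n))"
    using i by (subst sum.remove[of _ i]) auto
  thus ?thesis unfolding lin_term[OF i] quad_term U by simp
qed

end


theorem theorem1:
  fixes d N s :: nat and C :: "nat \<Rightarrow> real mat" and \<alpha> \<beta> :: "nat \<Rightarrow> real"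
    and \<rho>min :: real and r :: nat and T :: "nat set"
  assumes "d \<ge> 1" and "N \<ge> 1" and "s \<ge> 1"
    and C_carrier: "\<And>n. n < N \<Longrightarrow> C n \<in> carrier_mat d d"
    and C_sym: "\<And>n. n < N \<Longrightarrow> transpose_mat (C n) = C n"
    and \<alpha>_pos: "\<And>n. n < N \<Longrightarrow> 0 < \<alpha> n"
    and \<alpha>\<beta>: "\<And>n. n < N \<Longrightarrow> \<alpha> n \<le> \<beta> n"
    and eig: "\<And>n lam. n < N \<Longrightarrow> eigenvalue (C n) lam \<Longrightarrow> \<alpha> n \<le> lam \<and> lam \<le> \<beta> n"
    and deg: "\<And>r'. r' < d \<Longrightarrow> card (nbhd d N C r') \<le> s"
    and \<rho>min_pos: "\<rho>min > 0"
    and \<rho>min: "\<And>a b. cig_edge d N C a b \<Longrightarrow> part_corr N C \<alpha> a b \<ge> \<rho>min"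
    and r: "r < d"
    and T: "T \<subseteq> {0..<d} - {r}" and card_T: "card T \<le> s"
  shows "(nbhd d N C r - T \<noteq> {} \<longrightarrow>
            CV d N C r T \<ge> \<rho>min + mtrace (minv (Ktilde N C r)) / real N)
       \<and> (nbhd d N C r \<subseteq> T \<longrightarrow>
            CV d N C r T = mtrace (minv (Ktilde N C r)) / real N)"
proof -
  have N0: "N > 0" using assms(2) by simp
  have Td: "T \<subseteq> {..<d}" and rT: "r \<notin> T" using T by auto
  define K where "K = Kmat C"
  have Csym: "C n $$ (a,b) = C n $$ (b,a)" if "n < N" "a < d" "b < d" for n a b
  proof -
    have "C n $$ (a,b) = transpose_mat (C n) $$ (a,b)" using C_sym[OF that(1)] by simp
    also have "\<dots> = C n $$ (b,a)" using that C_carrier[OF that(1)] by simp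
    finally show ?thesis .
  qed
  have pd: "qf d (C n) x x \<ge> \<alpha> n * nsq d x" if n: "n < N" for n x
    by (rule sym_eig_lower[OF C_carrier[OF n]]) (use Csym n eig in auto)
  have Kp: "C n * K n = 1\<^sub>m d \<and> K n * C n = 1\<^sub>m d \<and> K n \<in> carrier_mat d d" if n: "n < N" for n
  proof -
    have ker: "v = 0\<^sub>v d" if v: "v \<in> carrier_vec d" and Cv: "C n *\<^sub>v v = 0\<^sub>v d" for v
    proof (rule ccontr)
      assume nz: "v \<noteq> 0\<^sub>v d"
      have "C n *\<^sub>v v = 0 \<cdot>\<^sub>v v" using Cv v by auto
      hence "eigenvector (C n) v 0" unfolding eigenvector_def using v nz C_carrier[OF n] by auto
      hence "eigenvalue (C n) 0" unfolding eigenvalue_def by blast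
      hence "\<alpha> n \<le> 0" using eig[OF n] by blast
      thus False using \<alpha>_pos[OF n] by simp
    qed
    show ?thesis using minv_props[OF C_carrier[OF n] ker] unfolding K_def Kmat_def by auto
  qed
  have Ksym: "K n $$ (a,b) = K n $$ (b,a)" if n: "n < N" and "a < d" "b < d" for n a b
  proof -
    have "transpose_mat (K n) = K n" using inv_sym[OF C_carrier[OF n] _ _ _ C_sym[OF n]] Kp[OF n] by blast
    hence "K n $$ (a,b) = transpose_mat (K n) $$ (a,b)" by simp
    also have "\<dots> = K n $$ (b,a)" using that Kp[OF n] by auto
    finally show ?thesis .
  qed
  have KposN: "K n $$ (r,r) > 0" if n: "n < N" for n
    using Kpos[OF C_carrier[OF n] _ _ _ _ \<alpha>_pos[OF n] r, of "K n"] Kp[OF n] Csym[OF n] pd[OF n] by blast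
  define S where "S = stacked_cov d N C"
  define Y where "Y = comp_idx d N {r}"
  define Z where "Z = comp_idx d N T"
  define m where "m = card Z"
  define SYY where "SYY = submatrix S Y Y"
  define SYZ where "SYZ = submatrix S Y Z"
  define SZY where "SZY = submatrix S Z Y"
  define M where "M = submatrix S Z Z"
  have dimS: "dim_row S = d*N" "dim_col S = d*N" unfolding S_def stacked_cov_def by auto
  have cY: "card {i. i < d*N \<and> i \<in> Y} = N"
  proof -
    have "{r} \<subseteq> {..<d}" using r by simp
    thus ?thesis unfolding Y_def card_restrict[OF comp_idx_bound] card_comp_idx[OF N0 \<open>{r} \<subseteq> {..<d}\<close>] by simp
  qed
  have cZ: "card {i. i < d*N \<and> i \<in> Z} = m"
    unfolding Z_def m_def card_restrict[OF comp_idx_bound] ..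
  have SYY_c: "SYY \<in> carrier_mat N N" unfolding SYY_def carrier_mat_def using dim_submatrix[of S Y Y] dimS cY cZ by simp
  have SYZ_c: "SYZ \<in> carrier_mat N m" unfolding SYZ_def carrier_mat_def using dim_submatrix[of S Y Z] dimS cY cZ by simp
  have SZY_c: "SZY \<in> carrier_mat m N" unfolding SZY_def carrier_mat_def using dim_submatrix[of S Z Y] dimS cY cZ by simp
  have M_c: "M \<in> carrier_mat m m" unfolding M_def carrier_mat_def using dim_submatrix[of S Z Z] dimS cY cZ by simp
  have pZ: "pick Z a \<in> Z" if "a < m" for a using pick_in_set[of a Z] that unfolding m_def by auto
  have pZb: "pick Z a < d*N" if "a < m" for a using pZ[OF that] comp_idx_bound unfolding Z_def by auto
  have pY: "pick Y i = r*N + i" if "i < N" for i unfolding Y_def using pick_Y[OF N0 r that] .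
  have rNi: "r*N + i < d*N" if "i < N" for i using idx_bound[OF r that] .
  have M_e: "M $$ (a,b) = S $$ (pick Z a, pick Z b)" if "a < m" "b < m" for a b
    unfolding M_def by (rule submatrix_index) (use that in \<open>simp_all add: dimS cZ\<close>)
  have SYZ_e: "SYZ $$ (i,a) = S $$ (r*N+i, pick Z a)" if "i < N" "a < m" for i a
    unfolding SYZ_def using that by (subst submatrix_index) (simp_all add: dimS cZ cY pY)
  have SZY_e: "SZY $$ (a,i) = S $$ (pick Z a, r*N+i)" if "i < N" "a < m" for i a
    unfolding SZY_def using that by (subst submatrix_index) (simp_all add: dimS cZ cY pY)
  have SYY_e: "SYY $$ (i,i) = C i $$ (r,r)" if "i < N" for i
  proof -
    have "SYY $$ (i,i) = S $$ (r*N+i, r*N+i)"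
      unfolding SYY_def using that by (subst submatrix_index) (simp_all add: dimS cY pY)
    also have "\<dots> = C i $$ (r,r)" unfolding S_def using S_entry[OF r r that that] by simp
    finally show ?thesis .
  qed
  have Ssym: "S $$ (k,l) = S $$ (l,k)" if "k < d*N" "l < d*N" for k l
  proof -
    have "k div N < d" "l div N < d" using that by (simp_all add: less_mult_imp_div_less)
    moreover have "k mod N < N" "l mod N < N" using N0 by simp_all
    ultimately show ?thesis unfolding S_def stacked_cov_def using that Csym by auto
  qed
  define Wof where "Wof w k = w (card {z\<in>Z. z < k})" for w :: "nat \<Rightarrow> real" and k
  have wpick: "Wof w (pick Z a) = w a" if "a < m" for w a
    unfolding Wof_def using card_pick[of a Z] that unfolding m_def by auto
  have qM0: "qf m M w w = (\<Sum>a<m. \<Sum>b<m. Wof w (pick Z a) * S $$ (pick Z a, pick Z b) * Wof w (pick Z b))" for w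
    unfolding qf_def by (intro sum.cong refl) (simp add: wpick M_e)
  have qM: "qf m M w w = (\<Sum>n<N. qf d (C n) (uW T N (Wof w) n) (uW T N (Wof w) n))" for w
  proof -
    have "qf m M w w = (\<Sum>a<m. \<Sum>b<m. Wof w (pick Z a) * S $$ (pick Z a, pick Z b) * Wof w (pick Z b))"
      unfolding qf_def by (intro sum.cong refl) (simp add: wpick M_e)
    also have "\<dots> = (\<Sum>n<N. qf d (C n) (uW T N (Wof w) n) (uW T N (Wof w) n))"
      unfolding m_def Z_def S_def by (rule quad_term[OF N0 Td r])
    finally show ?thesis .
  qed
  have qn_nonneg: "qf d (C n) x x \<ge> 0" if "n < N" for n x
    using pd[OF that, of x] \<alpha>_pos[OF that] nsq_nonneg[of d x] by (smt (verit) mult_nonneg_nonneg)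
  have psdM: "qf m M w w \<ge> 0" for w unfolding qM by (intro sum_nonneg qn_nonneg) auto
  have kerM: "v = 0\<^sub>v m" if v: "v \<in> carrier_vec m" and Mv: "M *\<^sub>v v = 0\<^sub>v m" for v
  proof -
    define w where "w a = v $ a" for a
    have "qf m M w w = (\<Sum>a<m. w a * (M *\<^sub>v v) $ a)"
      unfolding qf_def w_def using M_c v
      by (intro sum.cong refl) (simp add: scalar_prod_def sum_distrib_left atLeast0LessThan mult.assoc)
    also have "\<dots> = 0" using Mv by simp
    finally have "(\<Sum>n<N. qf d (C n) (uW T N (Wof w) n) (uW T N (Wof w) n)) = 0" unfolding qM .
    hence z: "qf d (C n) (uW T N (Wof w) n) (uW T N (Wof w) n) = 0" if "n < N" for n
      using qn_nonneg that by (subst (asm) sum_nonneg_eq_0_iff) auto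
    have zz: "uW T N (Wof w) n t = 0" if "n < N" "t < d" for n t
    proof -
      have "\<alpha> n * nsq d (uW T N (Wof w) n) \<le> 0" using pd[OF that(1)] z[OF that(1)] by metis
      hence "nsq d (uW T N (Wof w) n) \<le> 0" using \<alpha>_pos[OF that(1)] by (simp add: mult_le_0_iff)
      hence "nsq d (uW T N (Wof w) n) = 0" using nsq_nonneg by (metis order.antisym)
      thus ?thesis using nsq_zero that(2) by blast
    qed
    show ?thesis
    proof (rule eq_vecI)
      fix a assume "a < dim_vec (0\<^sub>v m)"
      hence a: "a < m" by simp
      define t where "t = pick Z a div N"
      define n where "n = pick Z a mod N"
      have tT: "t \<in> T" using pZ[OF a] unfolding t_def Z_def comp_idx_def by auto
      have n: "n < N" unfolding n_def using N0 by simp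
      have pa: "pick Z a = t*N + n" unfolding t_def n_def by simp
      have "v $ a = Wof w (pick Z a)" using wpick[OF a] unfolding w_def by simp
      also have "\<dots> = uW T N (Wof w) n t" unfolding uW_def pa using tT by simp
      also have "\<dots> = 0" using zz[OF n] tT Td by auto
      finally show "v $ a = 0\<^sub>v m $ a" using a by simp
    qed (use v in simp)
  qed
  define P where "P = minv M"
  have MP: "M * P = 1\<^sub>m m" and P_c: "P \<in> carrier_mat m m"
    using minv_props[OF M_c kerM] unfolding P_def by auto
  have Msym: "M $$ (a,b) = M $$ (b,a)" if "a < m" "b < m" for a b
    using that by (simp add: M_e Ssym pZb)
  have Kc: "K n \<in> carrier_mat d d" and CK: "C n * K n = 1\<^sub>m d" if "n < N" for n
    using Kp[OF that] by auto
  have Csym': "\<And>a b. a < d \<Longrightarrow> b < d \<Longrightarrow> C n $$ (a,b) = C n $$ (b,a)" if "n < N" for n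
    using Csym[OF that] by blast
  have qlow: "qf d (C n) u u \<ge> 1 / K n $$ (r,r) + \<alpha> n * nsq d (\<lambda>t. u t - gv (K n) r t)"
    if "n < N" "u r = 1" for n u
    by (rule qf_lower[OF C_carrier[OF that(1)] Kc[OF that(1)] CK[OF that(1)] Csym'[OF that(1)] pd[OF that(1)] \<alpha>_pos[OF that(1)] r]) (use that(2) in auto)
  have qgg: "qf d (C n) (gv (K n) r) (gv (K n) r) = 1 / K n $$ (r,r)" if "n < N" for n
    by (rule qf_gg[OF C_carrier[OF that(1)] Kc[OF that(1)] CK[OF that(1)] Csym'[OF that(1)] pd[OF that(1)] \<alpha>_pos[OF that(1)] r]) auto
  define c where "c i a = S $$ (r*N+i, pick Z a)" for i a
  define q where "q i w = C i $$ (r,r) - 2 * (\<Sum>a<m. c i a * w a) + qf m M w w" for i w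
  define D where "D i = cond_cov S Y Z $$ (i,i)" for i
  have Dexp: "D i = C i $$ (r,r) - qf m P (c i) (c i)" if i: "i < N" for i
  proof -
    have cc: "cond_cov S Y Z = SYY - SYZ * P * SZY"
      unfolding cond_cov_def SYY_def SYZ_def SZY_def P_def M_def ..
    have SP: "SYZ * P \<in> carrier_mat N m" using SYZ_c P_c by simp
    have "(SYZ * P * SZY) $$ (i,i) = (\<Sum>a<m. (SYZ * P) $$ (i,a) * SZY $$ (a,i))"
      by (rule mult_entry[OF SP SZY_c i i])
    also have "\<dots> = (\<Sum>a<m. (\<Sum>b<m. c i b * P $$ (b,a)) * c i a)"
      by (intro sum.cong refl) (simp add: mult_entry[OF SYZ_c P_c i] SYZ_e SZY_e i c_def Ssym pZb rNi)
    also have "\<dots> = qf m P (c i) (c i)"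
      unfolding qf_def sum_distrib_right by (subst sum.swap) simp
    finally have e: "(SYZ * P * SZY) $$ (i,i) = qf m P (c i) (c i)" .
    have "D i = SYY $$ (i,i) - (SYZ * P * SZY) $$ (i,i)"
      unfolding D_def cc using i SYZ_c SZY_c P_c by simp
    thus ?thesis unfolding e SYY_e[OF i] .
  qed
  have Dmin: "\<exists>w. q i w = D i" "\<And>w. D i \<le> q i w" if i: "i < N" for i
    using schur_min[OF M_c P_c MP Msym psdM, where c="c i" and sz="C i $$ (r,r)"]
    unfolding q_def Dexp[OF i] by auto
  have qeq: "q i w = qf d (C i) (Uf T N r (Wof w) i) (Uf T N r (Wof w) i)
       + (\<Sum>n\<in>{..<N}-{i}. qf d (C n) (uW T N (Wof w) n) (uW T N (Wof w) n))" if i: "i < N" for i w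
  proof -
    have "(\<Sum>a<m. c i a * w a) = (\<Sum>a<m. S $$ (r*N+i, pick Z a) * Wof w (pick Z a))"
      unfolding c_def by (intro sum.cong refl) (simp add: wpick)
    thus ?thesis unfolding q_def qM0
      using q_eq[where C=C and W="Wof w", OF N0 Td r i Csym'[OF i]] unfolding S_def Z_def m_def by simp
  qed
  have Ur: "Uf T N r W i r = 1" for W i unfolding Uf_def uW_def using rT by simp
  have Ub: "Uf T N r W i b = 0" if "b \<notin> T" "b \<noteq> r" for W i b unfolding Uf_def uW_def using that by simp
  have qlowU: "q i w \<ge> qf d (C i) (Uf T N r (Wof w) i) (Uf T N r (Wof w) i)" if i: "i < N" for i w
  proof -
    have "(\<Sum>n\<in>{..<N}-{i}. qf d (C n) (uW T N (Wof w) n) (uW T N (Wof w) n)) \<ge> 0"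
      by (intro sum_nonneg qn_nonneg) auto
    thus ?thesis unfolding qeq[OF i] by simp
  qed
  have Dlow: "\<exists>U. U r = 1 \<and> (\<forall>b. b \<notin> T \<longrightarrow> b \<noteq> r \<longrightarrow> U b = 0) \<and>
      D i \<ge> 1 / K i $$ (r,r) + \<alpha> i * nsq d (\<lambda>t. U t - gv (K i) r t)" if i: "i < N" for i
  proof -
    obtain w where w: "q i w = D i" using Dmin(1)[OF i] by blast
    let ?U = "Uf T N r (Wof w) i"
    have "D i \<ge> qf d (C i) ?U ?U" using qlowU[OF i, of w] w by simp
    moreover have "qf d (C i) ?U ?U \<ge> 1 / K i $$ (r,r) + \<alpha> i * nsq d (\<lambda>t. ?U t - gv (K i) r t)"
      by (rule qlow[where u="?U", OF i Ur])
    ultimately show ?thesis using Ur Ub by (intro exI[of _ ?U]) auto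
  qed
  have Dge: "D i \<ge> 1 / K i $$ (r,r)" if i: "i < N" for i
  proof -
    obtain U where "D i \<ge> 1 / K i $$ (r,r) + \<alpha> i * nsq d (\<lambda>t. U t - gv (K i) r t)"
      using Dlow[OF i] by blast
    moreover have "\<alpha> i * nsq d (\<lambda>t. U t - gv (K i) r t) \<ge> 0"
      using \<alpha>_pos[OF i] nsq_nonneg by simp
    ultimately show ?thesis by linarith
  qed
  have Dgeb: "D i \<ge> 1 / K i $$ (r,r) + \<alpha> i * (K i $$ (r,b) / K i $$ (r,r))^2"
    if i: "i < N" and b: "b < d" "b \<notin> T" "b \<noteq> r" for i b
  proof -
    obtain U where U: "U r = 1" "\<forall>b. b \<notin> T \<longrightarrow> b \<noteq> r \<longrightarrow> U b = 0"
      and DU: "D i \<ge> 1 / K i $$ (r,r) + \<alpha> i * nsq d (\<lambda>t. U t - gv (K i) r t)"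
      using Dlow[OF i] by blast
    have "(K i $$ (r,b) / K i $$ (r,r))^2 = (U b - gv (K i) r b)^2"
      using U b Ksym[OF i r b(1)] unfolding gv_def by (simp add: power2_eq_square)
    also have "\<dots> \<le> nsq d (\<lambda>t. U t - gv (K i) r t)" by (rule nsq_ge_sq[OF b(1)])
    finally have "\<alpha> i * (K i $$ (r,b) / K i $$ (r,r))^2 \<le> \<alpha> i * nsq d (\<lambda>t. U t - gv (K i) r t)"
      using \<alpha>_pos[OF i] by (simp add: mult_left_mono)
    thus ?thesis using DU by linarith
  qed
  have Dle: "D i \<le> 1 / K i $$ (r,r)" if i: "i < N" and nb: "nbhd d N C r \<subseteq> T" for i
  proof -
    define g where "g = gv (K i) r"
    define Wg where "Wg k = (if k mod N = i then - g (k div N) else 0)" for k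
    define wg where "wg a = Wg (pick Z a)" for a
    have WofWg: "Wof wg k = Wg k" if "k \<in> Z" for k
      unfolding Wof_def wg_def using pick_card_in_set[OF that] by simp
    have tnZ: "t*N+n \<in> Z" if "t \<in> T" "n < N" for t n
      unfolding Z_def comp_idx_image[OF N0 Td] using that by auto
    have uWg: "uW T N (Wof wg) n t = (if t \<in> T \<and> n = i then - g t else 0)" if n: "n < N" for n t
    proof (cases "t \<in> T")
      case True
      thus ?thesis unfolding uW_def using WofWg[OF tnZ[OF True n]] n unfolding Wg_def by simp
    qed (simp add: uW_def)
    have z: "qf d (C n) (uW T N (Wof wg) n) (uW T N (Wof wg) n) = 0" if "n \<in> {..<N}-{i}" for n
    proof -
      have "uW T N (Wof wg) n = (\<lambda>t. 0)" using that uWg by auto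
      thus ?thesis unfolding qf_def by simp
    qed
    have gzero: "g t = 0" if t: "t < d" "t \<notin> T" "t \<noteq> r" for t
    proof -
      have "t \<notin> nbhd d N C r" using nb t by auto
      hence "\<not> cig_edge d N C r t" unfolding nbhd_def using t by auto
      hence "Kmat C i $$ (r,t) = 0" unfolding cig_edge_def using r t i by auto
      hence "K i $$ (t,r) = 0" using Ksym[OF i r t(1)] unfolding K_def by simp
      thus ?thesis unfolding g_def gv_def by simp
    qed
    have gr: "g r = 1" unfolding g_def gv_def using KposN[OF i] by simp
    have Ueq: "Uf T N r (Wof wg) i t = g t" if t: "t < d" for t
    proof -
      have "Uf T N r (Wof wg) i t = (if t = r then 1 else 0) + (-1) * (if t \<in> T then - g t else 0)"
        unfolding Uf_def uWg[OF i] by simp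
      thus ?thesis using gr rT gzero[OF t] by (cases "t = r"; cases "t \<in> T") auto
    qed
    have "D i \<le> q i wg" by (rule Dmin(2)[OF i])
    also have "q i wg = qf d (C i) (Uf T N r (Wof wg) i) (Uf T N r (Wof wg) i)"
      unfolding qeq[OF i] using z by simp
    also have "\<dots> = qf d (C i) g g" by (rule qf_cong) (rule Ueq)
    also have "\<dots> = 1 / K i $$ (r,r)" unfolding g_def by (rule qgg[OF i])
    finally show ?thesis .
  qed
  have trace_cv: "CV d N C r T = (\<Sum>i<N. D i) / real N"
  proof -
    have "dim_row (cond_cov S Y Z) = N"
      unfolding cond_cov_def SYY_def[symmetric] SYZ_def[symmetric] SZY_def[symmetric] M_def[symmetric] P_def[symmetric]
      using SYZ_c P_c SZY_c by simp
    thus ?thesis unfolding CV_def mtrace_def D_def S_def[symmetric] Y_def[symmetric] Z_def[symmetric]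
      by (simp add: lessThan_atLeast0)
  qed
  have trace_K: "mtrace (minv (Ktilde N C r)) = (\<Sum>i<N. 1 / K i $$ (r,r))"
  proof -
    define Dg where "Dg = Matrix.mat N N (\<lambda>(i,j). if i = j then 1 / K i $$ (r,r) else 0)"
    have Kt_c: "Ktilde N C r \<in> carrier_mat N N" unfolding Ktilde_def by simp
    have Dg_c: "Dg \<in> carrier_mat N N" unfolding Dg_def by simp
    have "Ktilde N C r * Dg = 1\<^sub>m N"
    proof (rule eq_matI)
      fix i j assume ij: "i < dim_row (1\<^sub>m N)" "j < dim_col (1\<^sub>m N)"
      hence i: "i < N" and j: "j < N" by auto
      have "(Ktilde N C r * Dg) $$ (i,j) = (\<Sum>l<N. Ktilde N C r $$ (i,l) * Dg $$ (l,j))"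
        by (rule mult_entry[OF Kt_c Dg_c i j])
      also have "\<dots> = (\<Sum>l<N. if l = i then K i $$ (r,r) * Dg $$ (i,j) else 0)"
        by (intro sum.cong refl) (auto simp: Ktilde_def K_def i)
      also have "\<dots> = K i $$ (r,r) * Dg $$ (i,j)" using i by simp
      also have "\<dots> = 1\<^sub>m N $$ (i,j)" unfolding Dg_def using i j KposN[OF i] by (cases "i = j") auto
      finally show "(Ktilde N C r * Dg) $$ (i,j) = 1\<^sub>m N $$ (i,j)" .
    qed (use Kt_c Dg_c in auto)
    hence "minv (Ktilde N C r) = Dg" by (rule minv_unique[OF Kt_c Dg_c])
    thus ?thesis unfolding mtrace_def Dg_def by simp
  qed
  show ?thesis
  proof (intro conjI impI)
    assume "nbhd d N C r - T \<noteq> {}"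
    then obtain b where b: "b \<in> nbhd d N C r" "b \<notin> T" by blast
    have e: "cig_edge d N C r b" and bd: "b < d" and br: "b \<noteq> r"
      using b(1) unfolding nbhd_def cig_edge_def by auto
    have pc: "part_corr N C \<alpha> r b \<ge> \<rho>min" by (rule \<rho>min[OF e])
    have A: "(\<Sum>i<N. D i) \<ge> (\<Sum>i<N. 1 / K i $$ (r,r) + \<alpha> i * (K i $$ (r,b) / K i $$ (r,r))^2)"
      by (intro sum_mono Dgeb bd b(2) br) auto
    have B: "(\<Sum>i<N. 1 / K i $$ (r,r) + \<alpha> i * (K i $$ (r,b) / K i $$ (r,r))^2)
        = (\<Sum>i<N. 1 / K i $$ (r,r)) + real N * part_corr N C \<alpha> r b"
      unfolding part_corr_def K_def sum.distrib using N0 by simp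
    have "(\<Sum>i<N. D i) / real N \<ge> ((\<Sum>i<N. 1 / K i $$ (r,r)) + real N * part_corr N C \<alpha> r b) / real N"
      using A B N0 by (simp add: divide_right_mono)
    also have "((\<Sum>i<N. 1 / K i $$ (r,r)) + real N * part_corr N C \<alpha> r b) / real N
        = (\<Sum>i<N. 1 / K i $$ (r,r)) / real N + part_corr N C \<alpha> r b"
      using N0 by (simp add: field_simps)
    finally show "CV d N C r T \<ge> \<rho>min + mtrace (minv (Ktilde N C r)) / real N"
      unfolding trace_cv trace_K using pc by linarith
  next
    assume nb: "nbhd d N C r \<subseteq> T"
    have "(\<Sum>i<N. D i) = (\<Sum>i<N. 1 / K i $$ (r,r))"
      by (intro sum.cong refl order.antisym Dle Dge nb) auto
    thus "CV d N C r T = mtrace (minv (Ktilde N C r)) / real N"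
      unfolding trace_cv trace_K by simp
  qed
qed

end
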